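(* Let $Q=ABCD$ be a non-degenerate convex quadrangle of perimeter $2$ and $Q^\circ=KLMN$ its dual. Then $|AC|=|KM|$ and $|BD|=|LN|$; that is, duality preserves the lengths of the corresponding diagonals.
   Context: Identify $\mathbb{R}^2$ with $\mathbb{C}$. A quadrangle $Q=ABCD$ is an ordered 4-tuple of points $A,B,C,D\in\mathbb{C}$: $A$ is the first vertex and the order $A\to B\to C\to D\to A$ is the direction of traversal. Its edge vectors are $z_1=B-A$, $z_2=C-B$, $z_3=D-C$, $z_4=A-D$, so $z_1+z_2+z_3+z_4=0$; its perimeter is $|z_1|+|z_2|+|z_3|+|z_4|$. $Q$ is non-degenerate if each pair of consecutive edge vectors $(z_1,z_2),(z_2,z_3),(z_3,z_4),(z_4,z_1)$ consists of nonzero, non-collinear vectors. A non-degenerate quadrangle is convex if no two opposite edges intersect and all its interior angles are less than $\pi$. Associated plane: for a non-degenerate $Q$ of perimeter $2$, choose $u_1,\dots,u_4\in\mathbb{C}$ with $u_k^2=z_k$, where $u_1$ is an arbitrary square root of $z_1$ and for $k=1,2,3$ the sign of $u_{k+1}$ is chosen so that $\operatorname{Im}(\overline{u_k}u_{k+1})$ has the same sign as $\operatorname{Im}(\overline{z_k}z_{k+1})$. Write $u_k=a_k+i b_k$ and $\bar a=(a_1,a_2,a_3,a_4)$, $\bar b=(b_1,b_2,b_3,b_4)$; these are orthonormal in $\mathbb{R}^4$. Let $\Pi=\operatorname{span}(\bar a,\bar b)$ and $\Pi^\perp$ its orthogonal complement. Dual quadrangle: choose an orthonormal basis $(\bar c,\bar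 d)$ of $\Pi^\perp$, put $w_k=(c_k+i d_k)^2$; then $\sum_k w_k=0$ and $\sum_k|w_k|=2$. The dual quadrangle $Q^\circ=KLMN$ is the quadrangle with $L-K=w_1$, $M-L=w_2$, $N-M=w_3$, $K-N=w_4$. It is determined up to rotation, reflection and translation. *)

theory Defs
  imports "HOL-Analysis.Analysis"
begin

definition edge :: "complex \<Rightarrow> complex \<Rightarrow> complex \<Rightarrow> complex \<Rightarrow> nat \<Rightarrow> complex" where
  "edge A B C D k =
     (if k = 1 then B - A else if k = 2 then C - B else if k = 3 then D - C else A - D)"

definition vertex :: "complex \<Rightarrow> complex \<Rightarrow> complex \<Rightarrow> complex \<Rightarrow> nat \<Rightarrow> complex" where
  "vertex A B C D k =
     (if k = 1 then A else if k = 2 then B else if k = 3 then C else D)"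

definition nxt :: "nat \<Rightarrow> nat" where
  "nxt k = k mod 4 + 1"

definition cross :: "complex \<Rightarrow> complex \<Rightarrow> real" where
  "cross z w = Im (cnj z * w)"

definition perimeter :: "complex \<Rightarrow> complex \<Rightarrow> complex \<Rightarrow> complex \<Rightarrow> real" where
  "perimeter A B C D = (\<Sum>k=1..4. norm (edge A B C D k))"

definition nondegenerate :: "complex \<Rightarrow> complex \<Rightarrow> complex \<Rightarrow> complex \<Rightarrow> bool" where
  "nondegenerate A B C D \<longleftrightarrow>
     (\<forall>k\<in>{1..4}. edge A B C D k \<noteq> 0 \<and> edge A B C D (nxt k) \<noteq> 0 \<and>
        \<not> collinear {0, edge A B C D k, edge A B C D (nxt k)})"

definition orientation :: "complex \<Rightarrow> complex \<Rightarrow> complex \<Rightarrow> complex \<Rightarrow> real" where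
  "orientation A B C D =
     sgn ((\<Sum>k=1..4. cross (vertex A B C D k) (vertex A B C D (nxt k))) / 2)"

text \<open>Interior angle at the vertex between edge k and edge k+1 (the vertex with index nxt k):
  pi minus the signed turning angle, measured relative to the orientation.\<close>
definition interior_angle :: "complex \<Rightarrow> complex \<Rightarrow> complex \<Rightarrow> complex \<Rightarrow> nat \<Rightarrow> real" where
  "interior_angle A B C D k =
     pi - orientation A B C D * Arg (edge A B C D (nxt k) / edge A B C D k)"

definition convex_quad :: "complex \<Rightarrow> complex \<Rightarrow> complex \<Rightarrow> complex \<Rightarrow> bool" where
  "convex_quad A B C D \<longleftrightarrow>
     nondegenerate A B C D \<and>
     closed_segment A B \<inter> closed_segment C D = {} \<and>
     closed_segment B C \<inter> closed_segment D A = {} \<and>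
     (\<forall>k\<in>{1..4}. interior_angle A B C D k < pi)"

definition sqrt_lift :: "complex \<Rightarrow> complex \<Rightarrow> complex \<Rightarrow> complex \<Rightarrow> (nat \<Rightarrow> complex) \<Rightarrow> bool" where
  "sqrt_lift A B C D u \<longleftrightarrow>
     (\<forall>k\<in>{1..4}. (u k)\<^sup>2 = edge A B C D k) \<and>
     (\<forall>k\<in>{1..3}. sgn (cross (u k) (u (Suc k))) =
                  sgn (cross (edge A B C D k) (edge A B C D (Suc k))))"

definition vec_a :: "(nat \<Rightarrow> complex) \<Rightarrow> real^4" where
  "vec_a u = vector [Re (u 1), Re (u 2), Re (u 3), Re (u 4)]"

definition vec_b :: "(nat \<Rightarrow> complex) \<Rightarrow> real^4" where
  "vec_b u = vector [Im (u 1), Im (u 2), Im (u 3), Im (u 4)]"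

definition assoc_plane :: "(nat \<Rightarrow> complex) \<Rightarrow> (real^4) set" where
  "assoc_plane u = span {vec_a u, vec_b u}"

definition orth_compl :: "(real^4) set \<Rightarrow> (real^4) set" where
  "orth_compl S = {x. \<forall>y\<in>S. orthogonal x y}"

definition orthonormal_basis_of :: "real^4 \<Rightarrow> real^4 \<Rightarrow> (real^4) set \<Rightarrow> bool" where
  "orthonormal_basis_of c d S \<longleftrightarrow>
     c \<in> S \<and> d \<in> S \<and> norm c = 1 \<and> norm d = 1 \<and> orthogonal c d \<and> span {c, d} = S"

definition dual_edge :: "real^4 \<Rightarrow> real^4 \<Rightarrow> 4 \<Rightarrow> complex" where
  "dual_edge c d k = (Complex (c $ k) (d $ k))\<^sup>2"

definition is_dual :: "complex \<Rightarrow> complex \<Rightarrow> complex \<Rightarrow> complex \<Rightarrow>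
    complex \<Rightarrow> complex \<Rightarrow> complex \<Rightarrow> complex \<Rightarrow> bool" where
  "is_dual A B C D K L M N \<longleftrightarrow>
     (\<exists>u c d. sqrt_lift A B C D u \<and>
        orthonormal_basis_of c d (orth_compl (assoc_plane u)) \<and>
        L - K = dual_edge c d 1 \<and> M - L = dual_edge c d 2 \<and>
        N - M = dual_edge c d 3 \<and> K - N = dual_edge c d 4)"

end

theory Submission
  imports Defs
begin
lemma vector_4:
 "(vector [x,y,z,w] ::('a::zero)^4)$1 = x"
 "(vector [x,y,z,w] ::('a::zero)^4)$2 = y"
 "(vector [x,y,z,w] ::('a::zero)^4)$3 = z"
 "(vector [x,y,z,w] ::('a::zero)^4)$4 = w"
  unfolding vector_def by simp_all

lemma rows:
  fixes a b c d :: "real^4"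
  assumes aa: "a \<bullet> a = 1" and bb: "b \<bullet> b = 1" and ab: "a \<bullet> b = 0"
    and ob: "orthonormal_basis_of c d (orth_compl (span {a, b}))"
  shows "(if j = k then 1 else 0) = a$j*a$k + b$j*b$k + c$j*c$k + d$j*d$k"
proof -
  from ob have c: "c \<in> orth_compl (span {a, b})" and d: "d \<in> orth_compl (span {a, b})"
    and cc: "norm c = 1" and dd: "norm d = 1" and cd: "orthogonal c d"
    and sp: "span {c, d} = orth_compl (span {a, b})"
    by (auto simp: orthonormal_basis_of_def)
  have ca: "c \<bullet> a = 0" "c \<bullet> b = 0" "d \<bullet> a = 0" "d \<bullet> b = 0"
    using c d by (auto simp: orth_compl_def orthogonal_def span_base)
  have cc': "c \<bullet> c = 1" "d \<bullet> d = 1" "c \<bullet> d = 0"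
    using cc dd cd by (auto simp: orthogonal_def norm_eq_1)
  define x :: "real^4" where "x = axis j 1"
  define y where "y = x - (x \<bullet> a) *\<^sub>R a - (x \<bullet> b) *\<^sub>R b - (x \<bullet> c) *\<^sub>R c - (x \<bullet> d) *\<^sub>R d"
  have ya: "y \<bullet> a = 0" "y \<bullet> b = 0" "y \<bullet> c = 0" "y \<bullet> d = 0"
    using aa bb ab ca cc' unfolding y_def
    by (simp_all add: inner_diff_left inner_scaleR_left inner_commute[of b a] inner_commute[of c a]
        inner_commute[of c b] inner_commute[of d a] inner_commute[of d b] inner_commute[of d c])
  have "y \<in> orth_compl (span {a, b})"
    unfolding orth_compl_def
  proof (intro CollectI ballI)
    fix z assume "z \<in> span {a, b}"
    then show "orthogonal y z"
      by (rule orthogonal_to_span) (auto simp: orthogonal_def ya)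
  qed
  then have "y \<in> span {c, d}" using sp by simp
  then have "orthogonal y y"
    by (rule orthogonal_to_span) (auto simp: orthogonal_def ya)
  then have "y = 0" by (simp add: orthogonal_def)
  then have yk: "y $ k = 0" by simp
  have ax: "(axis j 1 :: real^4) $ k = (if j = k then 1 else 0)" by (simp add: axis_def)
  show ?thesis using yk unfolding y_def x_def
    using ax by (cases "j = k") (auto simp: inner_axis' algebra_simps)
qed

lemma sq_norm_id:
  fixes p q :: complex
  shows "(cmod (p^2+q^2))^2 = (Re p^2+Im p^2 - Re q^2 - Im q^2)^2 + 4*(Re p*Re q+Im p*Im q)^2"
  unfolding cmod_power2 by (simp add: power2_eq_square algebra_simps)

lemma diag_eq:
  fixes p q r s :: complex
  assumes "Re p^2+Im p^2 + Re r^2 + Im r^2 = 1" "Re q^2+Im q^2 + Re s^2 + Im s^2 = 1"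
    "Re p*Re q+Im p*Im q + Re r * Re s + Im r * Im s = 0"
  shows "cmod (p^2+q^2) = cmod (r^2+s^2)"
proof -
  have "(cmod (p^2+q^2))^2 = (cmod (r^2+s^2))^2"
    unfolding sq_norm_id
  proof -
    have e1: "Re p^2+Im p^2 - Re q^2 - Im q^2 = -(Re r^2+Im r^2 - Re s^2 - Im s^2)" using assms by linarith
    have e2: "Re p*Re q+Im p*Im q = -(Re r * Re s + Im r * Im s)" using assms by linarith
    show "(Re p^2+Im p^2 - Re q^2 - Im q^2)^2 + 4*(Re p*Re q+Im p*Im q)^2 =
      (Re r^2+Im r^2 - Re s^2 - Im s^2)^2 + 4*(Re r*Re s+Im r*Im s)^2"
      by (simp only: e1 e2 power2_minus)
  qed
  then show ?thesis by (simp add: power2_eq_iff_nonneg)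
qed

theorem theorem7p1:
  fixes A B C D K L M N :: complex
  assumes "nondegenerate A B C D"
    and "convex_quad A B C D"
    and "perimeter A B C D = 2"
    and "is_dual A B C D K L M N"
  shows "dist A C = dist K M \<and> dist B D = dist L N"
proof -
  obtain u c d where sl: "sqrt_lift A B C D u"
    and ob: "orthonormal_basis_of c d (orth_compl (assoc_plane u))"
    and w1: "L - K = dual_edge c d 1" and w2: "M - L = dual_edge c d 2"
    and w3: "N - M = dual_edge c d 3" and w4: "K - N = dual_edge c d 4"
    using assms(4) unfolding is_dual_def by blast
  have sq: "(u 1)^2 = B - A" "(u 2)^2 = C - B" "(u 3)^2 = D - C" "(u 4)^2 = A - D"
    using sl unfolding sqrt_lift_def by (auto simp: edge_def)
  have per: "cmod (B - A) + cmod (C - B) + cmod (D - C) + cmod (A - D) = 2"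
    using assms(3) by (simp add: perimeter_def edge_def eval_nat_numeral atLeastAtMostSuc_conv add.assoc)
  have nrm: "cmod ((u k)^2) = Re (u k)^2 + Im (u k)^2" for k
    by (simp add: norm_power cmod_power2)
  have sum0: "(u 1)^2 + (u 2)^2 + (u 3)^2 + (u 4)^2 = 0" unfolding sq by simp
  define a where "a = vec_a u"
  define b where "b = vec_b u"
  have ac: "a$1 = Re (u 1)" "a$2 = Re (u 2)" "a$3 = Re (u 3)" "a$4 = Re (u 4)"
    "b$1 = Im (u 1)" "b$2 = Im (u 2)" "b$3 = Im (u 3)" "b$4 = Im (u 4)"
    unfolding a_def b_def vec_a_def vec_b_def by (simp_all add: vector_4)
  have S1: "a \<bullet> a + b \<bullet> b = 2"
    using per unfolding sq[symmetric] nrm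
    by (simp add: inner_vec_def sum_4 ac power2_eq_square algebra_simps)
  have "Re ((u 1)^2 + (u 2)^2 + (u 3)^2 + (u 4)^2) = 0" "Im ((u 1)^2 + (u 2)^2 + (u 3)^2 + (u 4)^2) = 0"
    using sum0 by simp_all
  then have S2: "a \<bullet> a - b \<bullet> b = 0" and S3: "a \<bullet> b = 0"
    by (simp_all add: inner_vec_def sum_4 ac power2_eq_square algebra_simps Re_power2 Im_power2)
  have aa: "a \<bullet> a = 1" "b \<bullet> b = 1" using S1 S2 by linarith+
  have ob': "orthonormal_basis_of c d (orth_compl (span {a, b}))"
    using ob unfolding assoc_plane_def a_def b_def .
  note R = rows[OF aa S3 ob']
  have R11: "a$1*a$1 + b$1*b$1 + c$1*c$1 + d$1*d$1 = 1" using R[of 1 1] by simp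
  have R22: "a$2*a$2 + b$2*b$2 + c$2*c$2 + d$2*d$2 = 1" using R[of 2 2] by simp
  have R33: "a$3*a$3 + b$3*b$3 + c$3*c$3 + d$3*d$3 = 1" using R[of 3 3] by simp
  have R12: "a$1*a$2 + b$1*b$2 + c$1*c$2 + d$1*d$2 = 0" using R[of 1 2] by simp
  have R23: "a$2*a$3 + b$2*b$3 + c$2*c$3 + d$2*d$3 = 0" using R[of 2 3] by simp
  define v where "v k = Complex (c$k) (d$k)" for k
  have wv: "dual_edge c d k = (v k)^2" for k unfolding dual_edge_def v_def by simp
  have "cmod ((u 1)^2 + (u 2)^2) = cmod ((v 1)^2 + (v 2)^2)"
    by (rule diag_eq) (use R11 R22 R12 in \<open>simp_all add: v_def ac power2_eq_square\<close>)
  moreover have "cmod ((u 2)^2 + (u 3)^2) = cmod ((v 2)^2 + (v 3)^2)"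
    by (rule diag_eq) (use R33 R22 R23 in \<open>simp_all add: v_def ac power2_eq_square\<close>)
  moreover have "dist A C = cmod ((u 1)^2 + (u 2)^2)"
    unfolding sq dist_norm by (simp add: norm_minus_commute)
  moreover have "dist B D = cmod ((u 2)^2 + (u 3)^2)"
    unfolding sq dist_norm by (simp add: norm_minus_commute)
  moreover have "dist K M = cmod ((v 1)^2 + (v 2)^2)"
    unfolding wv[symmetric] w1[symmetric] w2[symmetric] dist_norm by (simp add: norm_minus_commute)
  moreover have "dist L N = cmod ((v 2)^2 + (v 3)^2)"
    unfolding wv[symmetric] w3[symmetric] w2[symmetric] dist_norm by (simp add: norm_minus_commute)
  ultimately show ?thesis by simp
qed

end
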